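(* Let $L$ be an $R_0$-algebra. Let $\{F_t\mid t\in\Lambda\}$, where $\Lambda\subseteq(0,0.5]$, be a collection of fated filters of $L$ such that (i) $L=\bigcup_{t\in\Lambda}F_t$, and (ii) for all $s,t\in\Lambda$, $s<t$ if and only if $F_t\subset F_s$. Then the fuzzy subset $\mu$ of $L$ defined by $\mu(x)=\sup\{t\in\Lambda\mid x\in F_t\}$ for all $x\in L$ is an $(\in,\in\vee q)$-fuzzy fated filter of $L$.
   Context: An $R_0$-algebra is a bounded distributive lattice $(L,\wedge,\vee,0,1)$ with an order-reversing involution $\neg$ and a binary operation $\to$ such that for all $x,y,z\in L$: $x\to y=\neg y\to\neg x$; $1\to x=x$; $(y\to z)\wedge((x\to y)\to(x\to z))=y\to z$; $x\to(y\to z)=y\to(x\to z)$; $x\to(y\vee z)=(x\to y)\vee(x\to z)$; $(x\to y)\vee((x\to y)\to(\neg x\vee y))=1$. A fated filter of $L$ is a nonempty subset $A\subseteq L$ with $1\in A$ such that for all $x,y\in L$ and $a\in A$, $a\to((x\to y)\to x)\in A$ implies $x\in A$. For $x\in L$, $t\in(0,1]$ and a fuzzy subset $\mu:L\to[0,1]$: $x_t\in\mu$ iff $\mu(x)\ge t$; $x_t\,q\,\mu$ iff $\mu(x)+t>1$; $x_t\in\vee q\,\mu$ iff $x_t\in\mu$ or $x_t\,q\,\mu$. $\mu$ is an $(\in,\in\vee q)$-fuzzy fated filter of $L$ if (1) for all $x\in L$, $t\in(0,1]$: $x_t\in\mu\Rightarrow 1_t\in\vee q\,\mu$; and (2) for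 all $x,a,y\in L$, $t,s\in(0,1]$: if $(a\to((x\to y)\to x))_t\in\mu$ and $a_s\in\mu$ then $x_{\min\{t,s\}}\in\vee q\,\mu$. *)

theory Defs
  imports Main Complex_Main
begin

text \<open>An R0-algebra on the whole type 'a: the lattice structure (with bottom 0 and top 1)
  is the type's bounded distributive lattice structure; neg and imp are the extra operations.\<close>

definition R0_algebra :: "('a::{distrib_lattice,bounded_lattice} \<Rightarrow> 'a) \<Rightarrow> ('a \<Rightarrow> 'a \<Rightarrow> 'a) \<Rightarrow> bool" where
  "R0_algebra neg imp \<longleftrightarrow>
     (\<forall>x. neg (neg x) = x) \<and>
     (\<forall>x y. x \<le> y \<longrightarrow> neg y \<le> neg x) \<and>
     (\<forall>x y. imp x y = imp (neg y) (neg x)) \<and>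
     (\<forall>x. imp top x = x) \<and>
     (\<forall>x y z. inf (imp y z) (imp (imp x y) (imp x z)) = imp y z) \<and>
     (\<forall>x y z. imp x (imp y z) = imp y (imp x z)) \<and>
     (\<forall>x y z. imp x (sup y z) = sup (imp x y) (imp x z)) \<and>
     (\<forall>x y. sup (imp x y) (imp (imp x y) (sup (neg x) y)) = top)"

definition fated_filter :: "('a::{distrib_lattice,bounded_lattice} \<Rightarrow> 'a \<Rightarrow> 'a) \<Rightarrow> 'a set \<Rightarrow> bool" where
  "fated_filter imp A \<longleftrightarrow> A \<noteq> {} \<and> top \<in> A \<and>
     (\<forall>x y a. a \<in> A \<longrightarrow> imp a (imp (imp x y) x) \<in> A \<longrightarrow> x \<in> A)"

definition fz_in :: "'a \<Rightarrow> real \<Rightarrow> ('a \<Rightarrow> real) \<Rightarrow> bool" where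
  "fz_in x t \<mu> \<longleftrightarrow> \<mu> x \<ge> t"

definition fz_q :: "'a \<Rightarrow> real \<Rightarrow> ('a \<Rightarrow> real) \<Rightarrow> bool" where
  "fz_q x t \<mu> \<longleftrightarrow> \<mu> x + t > 1"

definition fz_in_or_q :: "'a \<Rightarrow> real \<Rightarrow> ('a \<Rightarrow> real) \<Rightarrow> bool" where
  "fz_in_or_q x t \<mu> \<longleftrightarrow> fz_in x t \<mu> \<or> fz_q x t \<mu>"

definition in_inq_fuzzy_fated_filter ::
  "('a::{distrib_lattice,bounded_lattice} \<Rightarrow> 'a \<Rightarrow> 'a) \<Rightarrow> ('a \<Rightarrow> real) \<Rightarrow> bool" where
  "in_inq_fuzzy_fated_filter imp \<mu> \<longleftrightarrow>
     (\<forall>x. 0 \<le> \<mu> x \<and> \<mu> x \<le> 1) \<and>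
     (\<forall>x t. t \<in> {0<..1} \<longrightarrow> fz_in x t \<mu> \<longrightarrow> fz_in_or_q top t \<mu>) \<and>
     (\<forall>x a y t s. t \<in> {0<..1} \<longrightarrow> s \<in> {0<..1} \<longrightarrow>
        fz_in (imp a (imp (imp x y) x)) t \<mu> \<longrightarrow> fz_in a s \<mu> \<longrightarrow>
        fz_in_or_q x (min t s) \<mu>)"

end

theory Submission
  imports Defs
begin

theorem corollary3p29:
  fixes neg :: "'a::{distrib_lattice,bounded_lattice} \<Rightarrow> 'a"
    and imp :: "'a \<Rightarrow> 'a \<Rightarrow> 'a"
    and \<Lambda> :: "real set"
    and F :: "real \<Rightarrow> 'a set"
    and \<mu> :: "'a \<Rightarrow> real"
  assumes "R0_algebra neg imp"
    and "\<Lambda> \<subseteq> {0<..1/2}"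
    and "\<forall>t\<in>\<Lambda>. fated_filter imp (F t)"
    and "UNIV = (\<Union>t\<in>\<Lambda>. F t)"
    and "\<forall>s\<in>\<Lambda>. \<forall>t\<in>\<Lambda>. s < t \<longleftrightarrow> F t \<subset> F s"
    and "\<forall>x. \<mu> x = Sup {t \<in> \<Lambda>. x \<in> F t}"
  shows "in_inq_fuzzy_fated_filter imp \<mu>"
proof -
  note L = assms(2) and FF = assms(3) and U = assms(4) and Ch = assms(5) and M = assms(6)
  have ne: "{t \<in> \<Lambda>. z \<in> F t} \<noteq> {}" for z
    using U by (metis (mono_tags, lifting) UNIV_I UN_E empty_Collect_eq)
  have bd: "bdd_above {t \<in> \<Lambda>. z \<in> F t}" for z
    unfolding bdd_above_def using L by (intro exI[of _ "1/2"]) auto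
  have dc: "z \<in> F r" if "r \<in> \<Lambda>" "r1 \<in> \<Lambda>" "r \<le> r1" "z \<in> F r1" for z r r1
  proof (cases "r < r1")
    case True then show ?thesis using Ch that by blast
  next
    case False then show ?thesis using that by auto
  qed
  have rng: "0 \<le> \<mu> z \<and> \<mu> z \<le> 1/2" for z
  proof -
    obtain t where t: "t \<in> \<Lambda>" "z \<in> F t" using ne[of z] by auto
    have "t \<le> \<mu> z" using M cSup_upper[OF _ bd[of z]] t by auto
    moreover have "Sup {t \<in> \<Lambda>. z \<in> F t} \<le> 1/2" using L by (intro cSup_least[OF ne[of z]]) auto
    hence "\<mu> z \<le> 1/2" using M by simp
    ultimately show ?thesis using t L by force
  qed
  have topin: "t \<in> \<Lambda> \<Longrightarrow> top \<in> F t" for t using FF unfolding fated_filter_def by blast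
  have mtop: "\<mu> z \<le> \<mu> top" for z
  proof -
    have "{t \<in> \<Lambda>. z \<in> F t} \<subseteq> {t \<in> \<Lambda>. top \<in> F t}" using topin by auto
    then show ?thesis using M cSup_subset_mono[OF ne bd] by metis
  qed
  have big: "\<exists>r\<in>\<Lambda>. z \<in> F r \<and> c < r" if "c < \<mu> z" for z c
    using that M less_cSup_iff[OF ne bd] by auto
  have key: "\<mu> x \<ge> min t s" if "\<mu> (imp a (imp (imp x y) x)) \<ge> t" "\<mu> a \<ge> s" for x a y t s
  proof (rule ccontr)
    assume "\<not> ?thesis"
    hence c1: "\<mu> x < \<mu> (imp a (imp (imp x y) x))" "\<mu> x < \<mu> a" using that by auto
    obtain r1 where r1: "r1 \<in> \<Lambda>" "imp a (imp (imp x y) x) \<in> F r1" "\<mu> x < r1" using big[OF c1(1)] by auto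
    obtain r2 where r2: "r2 \<in> \<Lambda>" "a \<in> F r2" "\<mu> x < r2" using big[OF c1(2)] by auto
    define r where "r = min r1 r2"
    have r: "r \<in> \<Lambda>" using r1 r2 r_def by (simp add: min_def)
    have "imp a (imp (imp x y) x) \<in> F r" using dc[OF r r1(1)] r1 r_def by auto
    moreover have "a \<in> F r" using dc[OF r r2(1)] r2 r_def by auto
    ultimately have "x \<in> F r" using FF r unfolding fated_filter_def by blast
    hence "r \<le> \<mu> x" using M cSup_upper[OF _ bd[of x]] r by auto
    thus False using r1 r2 r_def by auto
  qed
  show ?thesis unfolding in_inq_fuzzy_fated_filter_def fz_in_or_q_def fz_in_def
    proof (intro conjI allI impI)
    fix z show "0 \<le> \<mu> z" using rng by blast
    have "\<mu> z \<le> 1/2" using rng by blast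
    thus "\<mu> z \<le> 1" by linarith
  qed (use mtop key in \<open>auto intro: order_trans\<close>)
qed

end
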